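(* Let $d\ge 3$ and let $G_d$ be the group defined in the context. Then the element $a_1a_2\cdots a_d$ has infinite order in $G_d$.
   Context: Let $d\ge 3$, $X=\{1,\dots,d\}$, $X^*$ the free monoid on $X$, and $T$ the $d$-regular rooted tree with vertex set $X^*$ (root the empty word, $u$ adjacent to $ux$ for $x\in X$). $\mathrm{Aut}(T)$ is the group of root-preserving tree automorphisms, with product written left-to-right: $(gh)(u)=h(g(u))$. For $g\in\mathrm{Aut}(T)$ and $u\in X^*$ the section $g|_u\in\mathrm{Aut}(T)$ is defined by $g(uv)=g(u)\,g|_u(v)$. We write $g=(g|_1,\dots,g|_d)\lambda_g$, where $\lambda_g\in S_d$ is the permutation induced by $g$ on $X$ (so $g(xw)=\lambda_g(x)\,g|_x(w)$), and $e$ is the identity. For $j\in\mathbb{N}$, $\overline{j}\in\{1,\dots,d\}$ denotes the residue with $\overline j\equiv j \pmod d$. The group $G_d\le \mathrm{Aut}(T)$ is generated by $A=\{a_1,\dots,a_d\}$, where for each $i$, $a_i$ acts on the first level as the transposition $(i\ \overline{i+1})$, has sections $a_i|_i=a_i$, $a_i|_{\overline{i+1}}=a_{\overline{i+1}}$, and $a_i|_x=e$ for all other $x\in X$. Explicitly $a_1=(a_1,a_2,e,\dots,e)(1\,2)$, $a_2=(e,a_2,a_3,e,\dots,e)(2\,3)$, …, $a_{d-1}=(e,\dots,e,a_{d-1},a_d)(d-1\ d)$, $a_d=(a_1,e,\dots,e,a_d)(d\ 1)$. *)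

theory Defs
  imports Main
begin

text \<open>Vertices of the d-regular rooted tree T are words over X = {1..d},
  i.e. elements of lists {1..d}. Letters are natural numbers.\<close>

definition rsd :: "nat \<Rightarrow> nat \<Rightarrow> nat" where
  "rsd d j = (if j mod d = 0 then d else j mod d)"

text \<open>Action of the generator a_i of G_d on words, via its wreath recursion:
  a_i = (...) (i  overline(i+1)), with sections a_i|_i = a_i,
  a_i|_(overline(i+1)) = a_(overline(i+1)), and all other sections trivial;
  g(x w) = lambda_g(x) g|_x(w).\<close>

primrec gen_act :: "nat \<Rightarrow> nat \<Rightarrow> nat list \<Rightarrow> nat list" where
  "gen_act d i [] = []"
| "gen_act d i (x # w) =
     (if x = i then rsd d (i + 1) # gen_act d i w
      else if x = rsd d (i + 1) then i # gen_act d (rsd d (i + 1)) w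
      else x # w)"

text \<open>Products are written left-to-right, (gh)(u) = h(g(u)); hence
  a_1 a_2 ... a_d acts by first applying a_1, then a_2, ..., finally a_d.\<close>

definition prod_act :: "nat \<Rightarrow> nat list \<Rightarrow> nat list" where
  "prod_act d u = fold (gen_act d) [1..<d+1] u"

end

theory Submission
  imports Defs
begin


fun Tn :: "(nat \<Rightarrow> 'a \<Rightarrow> 'a) \<Rightarrow> nat \<Rightarrow> nat \<Rightarrow> 'a \<Rightarrow> 'a" where
  "Tn T i 0 = id"
| "Tn T i (Suc n) = T (i + n) \<circ> Tn T i n"

lemma iter_cyc:
  assumes "\<And>i v. F (c i # v) = c (Suc i) # T i v"
  shows "(F ^^ n) (c i # v) = c (i + n) # Tn T i n v"
  by (induction n) (auto simp: assms)

lemma Tn_add: "Tn T i (a + b) = Tn T (i + a) b \<circ> Tn T i a"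
  by (induction b) (auto simp: add.assoc)

lemma Tn_per:
  assumes "\<And>j. T (j + s) = T j"
  shows "Tn T (i + s * m) n = Tn T i n"
proof (induction n)
  case 0 then show ?case by simp
next
  case (Suc n)
  have "T (i + s * m + n) = T (i + n)"
  proof (induction m)
    case 0 then show ?case by simp
  next
    case (Suc m)
    have "T (i + s * Suc m + n) = T ((i + s * m + n) + s)" by (simp add: algebra_simps)
    also have "\<dots> = T (i + s * m + n)" by (rule assms)
    finally show ?case using Suc by simp
  qed
  then show ?case using Suc by simp
qed

lemma Tn_mult:
  assumes "\<And>j. T (j + s) = T j"
  shows "Tn T 0 (s * m) = (Tn T 0 s) ^^ m"
proof (induction m)
  case 0 then show ?case by simp
next
  case (Suc m)
  have "Tn T 0 (s * Suc m) = Tn T 0 (s * m + s)" by (simp add: algebra_simps)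
  also have "\<dots> = Tn T (0 + s * m) s \<circ> Tn T 0 (s * m)" using Tn_add[of T 0 "s * m" s] by simp
  also have "Tn T (0 + s * m) s = Tn T 0 s" using Tn_per[where T=T and s=s, OF assms, of 0 m s] by simp
  finally show ?case using Suc by (simp add: funpow_Suc_right funpow.simps(2))
qed

lemma cycle_lemma:
  assumes s: "s > 0" and inj: "inj_on cb {..<s}"
    and step: "\<And>i v. i < s \<Longrightarrow> F (cb i # v) = cb (Suc i mod s) # Tb i v"
    and IH: "\<And>n. (Tn (\<lambda>i. Tb (i mod s)) 0 s ^^ n) v = v \<Longrightarrow> s ^ k dvd n"
    and eq: "(F ^^ n) (cb 0 # v) = cb 0 # v"
  shows "s ^ Suc k dvd n"
proof -
  define c where "c i = cb (i mod s)" for i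
  define T where "T i = Tb (i mod s)" for i
  have st: "F (c i # v) = c (Suc i) # T i v" for i v
    using step[of "i mod s" v] s by (simp add: c_def T_def mod_Suc_eq)
  have "(F ^^ n) (c 0 # v) = c (0 + n) # Tn T 0 n v" by (rule iter_cyc, rule st)
  moreover have "c 0 = cb 0" using s by (simp add: c_def)
  ultimately have e: "c n # Tn T 0 n v = cb 0 # v" using eq by simp
  then have "cb (n mod s) = cb 0" by (simp add: c_def)
  then have "n mod s = 0" using inj s by (auto dest: inj_onD)
  then obtain m where m: "n = s * m" by auto
  have per: "T (j + s) = T j" for j by (simp add: T_def)
  have "(Tn T 0 s ^^ m) v = v" using e m Tn_mult[where T=T and s=s, OF per, of m] by simp
  moreover have "T = (\<lambda>i. Tb (i mod s))" by (simp add: T_def fun_eq_iff)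
  ultimately have "s ^ k dvd m" using IH[of m] by simp
  then show ?thesis using m by simp
qed


definition act :: "nat \<Rightarrow> nat list \<Rightarrow> nat list \<Rightarrow> nat list" where
  "act d ws = fold (gen_act d) ws"

lemma act_append: "act d (xs @ ys) = act d ys \<circ> act d xs"
  by (simp add: act_def)

lemma rsd_id: "1 \<le> j \<Longrightarrow> j \<le> d \<Longrightarrow> rsd d j = j"
  by (cases "j = d") (auto simp: rsd_def)

lemma rsd_Suc_d: "d \<ge> 2 \<Longrightarrow> rsd d (d + 1) = 1"
  by (simp add: rsd_def mod_Suc)

lemma ga_fix: "x \<noteq> j \<Longrightarrow> x \<noteq> rsd d (j + 1) \<Longrightarrow> gen_act d j (x # v) = x # v"
  by simp

lemma fold_fix:
  "(\<forall>j\<in>set js. x \<noteq> j \<and> x \<noteq> rsd d (j + 1)) \<Longrightarrow> fold (gen_act d) js (x # v) = x # v"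
  by (induction js) auto

lemma ga_hit1: "gen_act d j (j # v) = rsd d (j + 1) # gen_act d j v"
  by simp

lemma ga_hit2: "x = rsd d (j + 1) \<Longrightarrow> x \<noteq> j \<Longrightarrow> gen_act d j (x # v) = j # gen_act d x v"
  by simp

lemma upt_split: "a \<le> b \<Longrightarrow> b \<le> c \<Longrightarrow> [a..<c] = [a..<b] @ [b..<c]"
  using upt_add_eq_append[of a b "c - b"] by simp

lemma rsd_range: "d \<ge> 3 \<Longrightarrow> 1 \<le> j \<Longrightarrow> j \<le> d \<Longrightarrow> rsd d (j + 1) = (if j = d then 1 else j + 1)"
  using rsd_Suc_d[of d] rsd_id[of "j+1" d] by auto


lemma rsd_Suc: "Suc j \<le> d \<Longrightarrow> rsd d (Suc j) = Suc j" using rsd_id[of "Suc j" d] by simp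
lemma rsd_Sd: "d \<ge> 2 \<Longrightarrow> rsd d (Suc d) = 1" using rsd_Suc_d by simp

lemma g2: assumes "d \<ge> 3" shows "prod_act d (2 # v) = d # act d [2,1] v"
proof -
  have L: "[1..<d+1] = [1,2] @ [3..<d] @ [d]"
  proof -
    have "[1..<d+1] = [1..<3] @ [3..<d+1]" using assms upt_split[of 1 3 "d+1"] by simp
    moreover have "[1..<3] = [1,2::nat]" by (simp add: upt_rec)
    moreover have "[3..<d+1] = [3..<d] @ [d]" using assms by simp
    ultimately show ?thesis by simp
  qed
  have a: "fold (gen_act d) [1,2] (2 # v) = 1 # gen_act d 2 v"
    using assms by (simp add: rsd_Suc rsd_id numeral_2_eq_2)
  have b: "fold (gen_act d) [3..<d] (1 # w) = 1 # w" for w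
    using assms by (intro fold_fix) (auto simp: rsd_Suc rsd_id)
  have c: "gen_act d d (1 # w) = d # gen_act d 1 w" for w
    using assms by (simp add: rsd_Sd)
  show ?thesis unfolding prod_act_def L using a b c by (simp add: act_def)
qed

lemma gk: assumes "d \<ge> 3" "3 \<le> k" "k \<le> d" shows "prod_act d (k # v) = (k - 1) # act d [k] v"
proof -
  have L: "[1..<d+1] = [1..<k-1] @ [k-1] @ [k..<d+1]"
    using assms upt_split[of 1 "k-1" "d+1"] upt_conv_Cons[of "k-1" "d+1"] by simp
  have a: "fold (gen_act d) [1..<k-1] (k # v) = k # v"
  proof (intro fold_fix ballI conjI)
    fix j assume j: "j \<in> set [1..<k-1]"
    then show "k \<noteq> j" by auto
    have "j < k - 1" using j by simp
    then have "Suc j \<le> d" using assms by linarith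
    then show "k \<noteq> rsd d (j + 1)" using assms \<open>j < k - 1\<close> rsd_Suc[of j d] by (simp; linarith)
  qed
  have b: "gen_act d (k-1) (k # v) = (k-1) # gen_act d k v"
  proof -
    have e: "k - 1 + 1 = k" "k \<noteq> k - 1" using assms by auto
    show ?thesis by (rule ga_hit2) (use e assms rsd_id[of k d] in auto)
  qed
  have c: "fold (gen_act d) [k..<d+1] ((k-1) # w) = (k-1) # w" for w
  proof (intro fold_fix ballI conjI)
    fix j assume j: "j \<in> set [k..<d+1]"
    then show "k - 1 \<noteq> j" using assms by auto
    show "k - 1 \<noteq> rsd d (j + 1)"
    proof (cases "j = d")
      case True then show ?thesis using assms rsd_Sd[of d] by simp
    next
      case False then show ?thesis using assms j rsd_Suc[of j d] by (simp; linarith)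
    qed
  qed
  show ?thesis unfolding prod_act_def L using a b c by (simp add: act_def)
qed

lemma rsd_small: assumes "d \<ge> 3" shows "rsd d 2 = 2" "rsd d 3 = 3" "rsd d (Suc (Suc 0)) = 2"
  "rsd d (Suc (Suc (Suc 0))) = 3" "rsd d (Suc 0) = 1" "rsd d 1 = 1"
  using assms rsd_id[of 2 d] rsd_id[of 3 d] rsd_id[of 1 d] by (auto simp: numeral_2_eq_2 numeral_3_eq_3)

definition Lw :: "nat \<Rightarrow> nat list" where "Lw d = 2 # 1 # rev [3..<d+1]"

lemma L1: assumes "d \<ge> 3" shows "act d (Lw d) (1 # v) = 2 # act d [1] v"
proof -
  have a: "fold (gen_act d) [2,1] (1 # v) = 2 # gen_act d 1 v"
    using assms by (simp add: rsd_Suc rsd_id numeral_2_eq_2)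
  have b: "fold (gen_act d) (rev [3..<d+1]) (2 # w) = 2 # w" for w
  proof (intro fold_fix ballI conjI)
    fix j assume j: "j \<in> set (rev [3..<d+1])"
    then show "2 \<noteq> j" by auto
    show "2 \<noteq> rsd d (j + 1)"
    proof (cases "j = d")
      case True then show ?thesis using assms rsd_Sd[of d] by simp
    next
      case False then show ?thesis using assms j rsd_Suc[of j d] by (simp; linarith)
    qed
  qed
  show ?thesis unfolding Lw_def using a b by (simp add: act_def)
qed

lemma L2: assumes "d \<ge> 3" shows "act d (Lw d) (2 # v) = rsd d 4 # act d [2,3] v"
proof -
  have a: "fold (gen_act d) [2,1] (2 # v) = 3 # gen_act d 2 v"
    using rsd_small[OF assms] by simp
  have R: "rev [3..<d+1] = rev [4..<d+1] @ [3]"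
    using assms upt_conv_Cons[of 3 "d+1"] by simp
  have b: "fold (gen_act d) (rev [4..<d+1]) (3 # w) = 3 # w" for w
  proof (intro fold_fix ballI conjI)
    fix j assume j: "j \<in> set (rev [4..<d+1])"
    then show "3 \<noteq> j" by auto
    show "3 \<noteq> rsd d (j + 1)"
    proof (cases "j = d")
      case True then show ?thesis using assms rsd_Sd[of d] by simp
    next
      case False then show ?thesis using assms j rsd_Suc[of j d] by (simp; linarith)
    qed
  qed
  have c: "gen_act d 3 (3 # w) = rsd d 4 # gen_act d 3 w" for w
    using ga_hit1[of d 3 w] by simp
  show ?thesis unfolding Lw_def R using a b c by (simp add: act_def)
qed

lemma Lk: assumes "d \<ge> 3" "4 \<le> k" "k \<le> d"
  shows "act d (Lw d) (k # v) = rsd d (k + 1) # act d [k] v"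
proof -
  have a: "fold (gen_act d) [2,1] (k # v) = k # v"
    using assms rsd_small[OF assms(1)] by (intro fold_fix) auto
  have R: "rev [3..<d+1] = rev [k+1..<d+1] @ [k] @ rev [3..<k]"
    using assms upt_split[of 3 k "d+1"] upt_conv_Cons[of k "d+1"] by simp
  have b: "fold (gen_act d) (rev [k+1..<d+1]) (k # w) = k # w" for w
  proof (intro fold_fix ballI conjI)
    fix j assume j: "j \<in> set (rev [k+1..<d+1])"
    then show "k \<noteq> j" by auto
    show "k \<noteq> rsd d (j + 1)"
    proof (cases "j = d")
      case True then show ?thesis using assms rsd_Sd[of d] by simp
    next
      case False then show ?thesis using assms j rsd_Suc[of j d] by (simp; linarith)
    qed
  qed
  have c: "gen_act d k (k # w) = rsd d (k + 1) # gen_act d k w" for w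
    using ga_hit1[of d k w] by simp
  have e: "fold (gen_act d) (rev [3..<k]) (rsd d (k + 1) # w) = rsd d (k + 1) # w" for w
  proof (intro fold_fix ballI conjI)
    fix j assume j: "j \<in> set (rev [3..<k])"
    have r: "rsd d (k + 1) = (if k = d then 1 else k + 1)"
      using assms rsd_Sd[of d] rsd_Suc[of k d] by auto
    show "rsd d (k + 1) \<noteq> j" using r j by auto
    show "rsd d (k + 1) \<noteq> rsd d (j + 1)"
      using assms j rsd_Suc[of j d] r by (simp; linarith)
  qed
  show ?thesis unfolding Lw_def R using a b c e by (simp add: act_def)
qed


lemma act_Nil: "act d [] = id" by (simp add: act_def fun_eq_iff)

lemma Tn_act: "Tn (\<lambda>i. act d (W i)) i n = act d (concat (map W [i..<i+n]))"
  by (induction n) (auto simp: act_append act_Nil)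

lemma concat_single: "concat (map (\<lambda>x. [f x]) xs) = map f xs"
  by (induction xs) auto

definition cbg :: "nat \<Rightarrow> nat \<Rightarrow> nat" where "cbg d i = (if i = 0 then 2 else d + 1 - i)"
definition Wg :: "nat \<Rightarrow> nat \<Rightarrow> nat list" where "Wg d i = (if i = 0 then [2,1] else [d + 1 - i])"
definition cbl :: "nat \<Rightarrow> nat" where "cbl i = (if i = 0 then 1 else if i = 1 then 2 else i + 2)"
definition Wl :: "nat \<Rightarrow> nat list" where "Wl i = (if i = 0 then [1] else if i = 1 then [2,3] else [i + 2])"

lemma Tn_mod: assumes "s > 0"
  shows "Tn (\<lambda>i. act d (W (i mod s))) 0 s = act d (concat (map W [0..<s]))"
proof -
  have "Tn (\<lambda>i. act d (W (i mod s))) 0 s = act d (concat (map (\<lambda>i. W (i mod s)) [0..<s]))"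
    using Tn_act[of d "\<lambda>i. W (i mod s)" 0 s] by simp
  also have "map (\<lambda>i. W (i mod s)) [0..<s] = map W [0..<s]" by (rule map_cong) auto
  finally show ?thesis .
qed

lemma concat_g: assumes "d \<ge> 3" shows "concat (map (Wg d) [0..<d-1]) = Lw d"
proof -
  have U: "[0..<d-1] = 0 # [1..<d-1]" using assms upt_conv_Cons[of 0 "d-1"] by simp
  have "concat (map (Wg d) [1..<d-1]) = concat (map (\<lambda>i. [d + 1 - i]) [1..<d-1])"
    by (rule arg_cong[where f=concat], rule map_cong) (auto simp: Wg_def)
  also have "\<dots> = map (\<lambda>i. d + 1 - i) [1..<d-1]"
    by (rule concat_single)
  also have "\<dots> = rev [3..<d+1]"
    by (rule nth_equalityI) (auto simp del: upt_Suc simp: rev_nth)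
  finally show ?thesis using U by (simp add: Wg_def Lw_def)
qed

lemma concat_l: assumes "d \<ge> 3" shows "concat (map Wl [0..<d-1]) = [1..<d+1]"
proof -
  have U: "[0..<d-1] = 0 # 1 # [2..<d-1]" using assms upt_conv_Cons[of 0 "d-1"] upt_conv_Cons[of 1 "d-1"] by (simp add: numeral_2_eq_2)
  have "concat (map Wl [2..<d-1]) = concat (map (\<lambda>i. [i + 2]) [2..<d-1])"
    by (rule arg_cong[where f=concat], rule map_cong) (auto simp: Wl_def)
  also have "\<dots> = map (\<lambda>i. i + 2) [2..<d-1]"
    by (rule concat_single)
  also have "\<dots> = [4..<d+1]"
    by (rule nth_equalityI) (auto simp del: upt_Suc)
  finally have "concat (map Wl [0..<d-1]) = [1,2,3] @ [4..<d+1]" using U by (simp add: Wl_def)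
  also have "\<dots> = [1..<d+1]" using assms upt_split[of 1 4 "d+1"] by (simp add: upt_rec)
  finally show ?thesis .
qed


lemma step_g: assumes d: "d \<ge> 3" and i: "i < d - 1"
  shows "prod_act d (cbg d i # v) = cbg d (Suc i mod (d - 1)) # act d (Wg d i) v"
proof (cases "i = 0")
  case True
  have "Suc 0 mod (d - 1) = 1" using d by simp
  then show ?thesis using True g2[OF d] by (simp add: cbg_def Wg_def)
next
  case False
  have k: "3 \<le> d + 1 - i" "d + 1 - i \<le> d" using d i False by auto
  have e: "cbg d (Suc i mod (d - 1)) = d + 1 - i - 1"
  proof (cases "Suc i < d - 1")
    case True then show ?thesis using False by (simp add: cbg_def)
  next
    case F2: False
    then have "Suc i = d - 1" using i by simp
    then show ?thesis using d by (simp add: cbg_def)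
  qed
  show ?thesis using gk[OF d k] e False by (simp add: cbg_def Wg_def)
qed

lemma step_l: assumes d: "d \<ge> 3" and i: "i < d - 1"
  shows "act d (Lw d) (cbl i # v) = cbl (Suc i mod (d - 1)) # act d (Wl i) v"
proof -
  consider "i = 0" | "i = 1" | "i \<ge> 2" by linarith
  then show ?thesis
  proof cases
    case 1
    have "Suc 0 mod (d - 1) = 1" using d by simp
    then show ?thesis using 1 L1[OF d] by (simp add: cbl_def Wl_def)
  next
    case 2
    have e: "cbl (Suc i mod (d - 1)) = rsd d 4"
    proof (cases "d = 3")
      case True then show ?thesis using 2 by (simp add: cbl_def rsd_def)
    next
      case False
      then have "Suc i mod (d - 1) = 2" "rsd d 4 = 4" using 2 d rsd_id[of 4 d] by auto
      then show ?thesis by (simp add: cbl_def)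
    qed
    show ?thesis using 2 e L2[OF d] by (simp add: cbl_def Wl_def)
  next
    case 3
    have k: "4 \<le> i + 2" "i + 2 \<le> d" using d i 3 by auto
    have e: "cbl (Suc i mod (d - 1)) = rsd d (i + 2 + 1)"
    proof (cases "Suc i < d - 1")
      case True
      have "Suc (Suc (Suc i)) \<le> d" using True by linarith
      then have "rsd d (i + 2 + 1) = i + 3" using rsd_Suc[of "Suc (Suc i)" d] by simp
      then show ?thesis using True 3 by (simp add: cbl_def)
    next
      case False
      then have "i + 2 = d" using i by simp
      then have "rsd d (i + 2 + 1) = 1" using rsd_Sd[of d] d by simp
      moreover have "Suc i mod (d - 1) = 0"
      proof -
        have "d - 1 = Suc i" using \<open>i + 2 = d\<close> by simp
        then show ?thesis by simp
      qed
      ultimately show ?thesis by (simp add: cbl_def)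
    qed
    show ?thesis using Lk[OF d k] e 3 by (simp add: cbl_def Wl_def)
  qed
qed

lemma inj_g: "d \<ge> 3 \<Longrightarrow> inj_on (cbg d) {..<d - 1}"
  by (auto simp: inj_on_def cbg_def split: if_splits)

lemma inj_l: "inj_on cbl {..<d - 1}"
  by (auto simp: inj_on_def cbl_def split: if_splits)

lemma prod_act_eq: "prod_act d = act d [1..<d+1]"
  by (simp add: prod_act_def act_def fun_eq_iff)

lemma main:
  assumes d: "d \<ge> 3"
  shows "(\<exists>u\<in>lists {1..d}. \<forall>n. (prod_act d ^^ n) u = u \<longrightarrow> (d - 1) ^ k dvd n)
       \<and> (\<exists>u\<in>lists {1..d}. \<forall>n. (act d (Lw d) ^^ n) u = u \<longrightarrow> (d - 1) ^ k dvd n)"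
proof (induction k)
  case 0 then show ?case by auto
next
  case (Suc k)
  from Suc obtain v where v: "v \<in> lists {1..d}" "\<forall>n. (act d (Lw d) ^^ n) v = v \<longrightarrow> (d - 1) ^ k dvd n"
    by blast
  from Suc obtain w where w: "w \<in> lists {1..d}" "\<forall>n. (prod_act d ^^ n) w = w \<longrightarrow> (d - 1) ^ k dvd n"
    by blast
  have s: "d - 1 > 0" using d by simp
  have A: "\<forall>n. (prod_act d ^^ n) (cbg d 0 # v) = cbg d 0 # v \<longrightarrow> (d - 1) ^ Suc k dvd n"
  proof (intro allI impI)
    fix n assume eq: "(prod_act d ^^ n) (cbg d 0 # v) = cbg d 0 # v"
    have H: "Tn (\<lambda>i. act d (Wg d (i mod (d - 1)))) 0 (d - 1) = act d (Lw d)"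
      using Tn_mod[OF s, of d "Wg d"] concat_g[OF d] by simp
    show "(d - 1) ^ Suc k dvd n"
      by (rule cycle_lemma[where F="prod_act d" and cb="cbg d" and Tb="\<lambda>i. act d (Wg d i)" and v=v])
         (use s inj_g[OF d] step_g[OF d] H v(2) eq in auto)
  qed
  have B: "\<forall>n. (act d (Lw d) ^^ n) (cbl 0 # w) = cbl 0 # w \<longrightarrow> (d - 1) ^ Suc k dvd n"
  proof (intro allI impI)
    fix n assume eq: "(act d (Lw d) ^^ n) (cbl 0 # w) = cbl 0 # w"
    have H: "Tn (\<lambda>i. act d (Wl (i mod (d - 1)))) 0 (d - 1) = prod_act d"
      using Tn_mod[OF s, of d "Wl"] concat_l[OF d] prod_act_eq[of d] by simp
    show "(d - 1) ^ Suc k dvd n"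
      by (rule cycle_lemma[where F="act d (Lw d)" and cb="cbl" and Tb="\<lambda>i. act d (Wl i)" and v=w])
         (use s inj_l step_l[OF d] H w(2) eq in auto)
  qed
  have "cbg d 0 # v \<in> lists {1..d}" "cbl 0 # w \<in> lists {1..d}"
    using v w d by (auto simp: cbg_def cbl_def)
  then show ?case using A B by blast
qed

theorem lemma3p3:
  fixes d :: nat
  assumes "d \<ge> 3"
  shows "\<forall>n::nat. n \<ge> 1 \<longrightarrow> (\<exists>u \<in> lists {1..d}. (prod_act d ^^ n) u \<noteq> u)"
proof (intro allI impI)
  fix n :: nat assume n: "n \<ge> 1"
  obtain u where u: "u \<in> lists {1..d}" "\<forall>m. (prod_act d ^^ m) u = u \<longrightarrow> (d - 1) ^ n dvd m"
    using main[OF assms, of n] by blast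
  have "n < 2 ^ n" by simp
  also have "2 ^ n \<le> (d - 1) ^ n" using assms by (intro power_mono) auto
  finally have lt: "n < (d - 1) ^ n" .
  have "(prod_act d ^^ n) u \<noteq> u"
  proof
    assume "(prod_act d ^^ n) u = u"
    then have "(d - 1) ^ n dvd n" using u by blast
    then have "(d - 1) ^ n \<le> n" using n by (intro dvd_imp_le) auto
    then show False using lt by simp
  qed
  then show "\<exists>u \<in> lists {1..d}. (prod_act d ^^ n) u \<noteq> u" using u by blast
qed
end
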